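(* Let $m\ge 2$ be an integer and let $H$ be a finite simple connected graph of order at least $2$ with $n(H) \le m$. The Cartesian product $K_m \,\square\, H$ is well-dominated if and only if one of the following holds: (1) $m=2$ and $H$ is isomorphic to $K_2$; (2) $m=3$ and $H$ is isomorphic to $K_3$ or to the path $P_3$; (3) $m \ge 4$ and $H$ is isomorphic to $K_m$.
   Context: $n(H)$ is the order of $H$. A graph is well-dominated if every minimal (with respect to inclusion) dominating set is a minimum dominating set. The Cartesian product $G\,\square\, H$ has vertex set $V(G)\times V(H)$, with $(g_1,h_1)$ adjacent to $(g_2,h_2)$ iff either ($g_1=g_2$ and $h_1h_2\in E(H)$) or ($h_1=h_2$ and $g_1g_2\in E(G)$). *)

theory Defs
  imports Main
begin

definition simple_graph :: "'a set \<Rightarrow> ('a \<Rightarrow> 'a \<Rightarrow> bool) \<Rightarrow> bool" where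
  "simple_graph V E \<longleftrightarrow> finite V \<and> (\<forall>x y. E x y \<longrightarrow> x \<in> V \<and> y \<in> V)
     \<and> (\<forall>x y. E x y \<longrightarrow> E y x) \<and> (\<forall>x. \<not> E x x)"

definition connected_graph :: "'a set \<Rightarrow> ('a \<Rightarrow> 'a \<Rightarrow> bool) \<Rightarrow> bool" where
  "connected_graph V E \<longleftrightarrow> (\<forall>x\<in>V. \<forall>y\<in>V. E\<^sup>*\<^sup>* x y)"

definition dominating_set :: "'a set \<Rightarrow> ('a \<Rightarrow> 'a \<Rightarrow> bool) \<Rightarrow> 'a set \<Rightarrow> bool" where
  "dominating_set V E D \<longleftrightarrow> D \<subseteq> V \<and> (\<forall>v\<in>V. v \<in> D \<or> (\<exists>u\<in>D. E u v))"

definition minimal_dominating_set :: "'a set \<Rightarrow> ('a \<Rightarrow> 'a \<Rightarrow> bool) \<Rightarrow> 'a set \<Rightarrow> bool" where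
  "minimal_dominating_set V E D \<longleftrightarrow> dominating_set V E D \<and>
     (\<forall>D'. D' \<subset> D \<longrightarrow> \<not> dominating_set V E D')"

definition minimum_dominating_set :: "'a set \<Rightarrow> ('a \<Rightarrow> 'a \<Rightarrow> bool) \<Rightarrow> 'a set \<Rightarrow> bool" where
  "minimum_dominating_set V E D \<longleftrightarrow> dominating_set V E D \<and>
     (\<forall>D'. dominating_set V E D' \<longrightarrow> card D \<le> card D')"

definition well_dominated :: "'a set \<Rightarrow> ('a \<Rightarrow> 'a \<Rightarrow> bool) \<Rightarrow> bool" where
  "well_dominated V E \<longleftrightarrow> (\<forall>D. minimal_dominating_set V E D \<longrightarrow> minimum_dominating_set V E D)"

definition graph_iso :: "'a set \<Rightarrow> ('a \<Rightarrow> 'a \<Rightarrow> bool) \<Rightarrow> 'b set \<Rightarrow> ('b \<Rightarrow> 'b \<Rightarrow> bool) \<Rightarrow> bool" where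
  "graph_iso V E V' E' \<longleftrightarrow> (\<exists>f. bij_betw f V V' \<and> (\<forall>x\<in>V. \<forall>y\<in>V. E x y \<longleftrightarrow> E' (f x) (f y)))"

definition K_verts :: "nat \<Rightarrow> nat set" where "K_verts m = {..<m}"
definition K_adj :: "nat \<Rightarrow> nat \<Rightarrow> nat \<Rightarrow> bool" where
  "K_adj m i j \<longleftrightarrow> i < m \<and> j < m \<and> i \<noteq> j"

definition P3_verts :: "nat set" where "P3_verts = {0, 1, 2}"
definition P3_adj :: "nat \<Rightarrow> nat \<Rightarrow> bool" where
  "P3_adj i j \<longleftrightarrow> (i = 0 \<and> j = 1) \<or> (i = 1 \<and> j = 0) \<or> (i = 1 \<and> j = 2) \<or> (i = 2 \<and> j = 1)"

definition cart_verts :: "'a set \<Rightarrow> 'b set \<Rightarrow> ('a \<times> 'b) set" where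
  "cart_verts VG VH = VG \<times> VH"

definition cart_adj :: "'a set \<Rightarrow> ('a \<Rightarrow> 'a \<Rightarrow> bool) \<Rightarrow> 'b set \<Rightarrow> ('b \<Rightarrow> 'b \<Rightarrow> bool)
    \<Rightarrow> 'a \<times> 'b \<Rightarrow> 'a \<times> 'b \<Rightarrow> bool" where
  "cart_adj VG EG VH EH p q \<longleftrightarrow>
     (fst p = fst q \<and> fst p \<in> VG \<and> EH (snd p) (snd q)) \<or>
     (snd p = snd q \<and> snd p \<in> VH \<and> EG (fst p) (fst q))"

end

theory Submission
  imports Defs
begin

lemma dom_mono: "dominating_set W R D \<Longrightarrow> D \<subseteq> D' \<Longrightarrow> D' \<subseteq> W \<Longrightarrow> dominating_set W R D'"
  unfolding dominating_set_def by blast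

lemma minimal_iff:
  "minimal_dominating_set W R D \<longleftrightarrow> dominating_set W R D \<and> (\<forall>p\<in>D. \<not> dominating_set W R (D - {p}))"
proof
  assume "minimal_dominating_set W R D"
  then show "dominating_set W R D \<and> (\<forall>p\<in>D. \<not> dominating_set W R (D - {p}))"
    unfolding minimal_dominating_set_def by blast
next
  assume a: "dominating_set W R D \<and> (\<forall>p\<in>D. \<not> dominating_set W R (D - {p}))"
  show "minimal_dominating_set W R D"
    unfolding minimal_dominating_set_def
  proof (intro conjI allI impI)
    show "dominating_set W R D" using a by blast
    fix D' assume "D' \<subset> D"
    then obtain p where p: "p \<in> D" "p \<notin> D'" by blast
    show "\<not> dominating_set W R D'"
    proof
      assume "dominating_set W R D'"
      then have "dominating_set W R (D - {p})"
        by (rule dom_mono) (use p \<open>D' \<subset> D\<close> a in \<open>auto simp: dominating_set_def\<close>)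
      then show False using a p by blast
    qed
  qed
qed

lemma bc:
  assumes sg: "simple_graph V E" and noiso: "\<forall>v\<in>V. \<exists>w. E v w"
  shows "\<exists>S. dominating_set V E S \<and> (\<forall>s\<in>S. \<exists>e\<in>V - S. E s e \<and> (\<forall>t\<in>S. E t e \<longrightarrow> t = s))"
proof -
  have fin: "finite V" and sym: "\<And>x y. E x y \<Longrightarrow> E y x" and irr: "\<And>x. \<not> E x x"
    and inV: "\<And>x y. E x y \<Longrightarrow> x \<in> V \<and> y \<in> V"
    using sg unfolding simple_graph_def by blast+
  have "dominating_set V E V" unfolding dominating_set_def by blast
  then obtain S0 where S0: "dominating_set V E S0" and S0min: "\<And>S. dominating_set V E S \<Longrightarrow> card S0 \<le> card S"
    using ex_has_least_nat[of "dominating_set V E" V card] by blast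
  define P where "P S \<longleftrightarrow> dominating_set V E S \<and> card S = card S0" for S
  define ec where "ec S = card {p \<in> S \<times> S. E (fst p) (snd p)}" for S
  have "\<forall>S. P S \<longrightarrow> ec S < Suc (card (V \<times> V))"
  proof (intro allI impI)
    fix S assume "P S"
    then have "S \<subseteq> V" unfolding P_def dominating_set_def by blast
    then have "{p \<in> S \<times> S. E (fst p) (snd p)} \<subseteq> V \<times> V" by blast
    then have "ec S \<le> card (V \<times> V)" unfolding ec_def
      by (intro card_mono) (simp_all add: fin)
    then show "ec S < Suc (card (V \<times> V))" by simp
  qed
  moreover have "P S0" using S0 unfolding P_def by blast
  ultimately obtain S where PS: "P S" and Smax: "\<And>S'. P S' \<Longrightarrow> ec S' \<le> ec S"
    using ex_has_greatest_nat[of P S0 ec] by blast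
  have Sd: "dominating_set V E S" and cS: "card S = card S0" using PS unfolding P_def by auto
  have SV: "S \<subseteq> V" using Sd unfolding dominating_set_def by blast
  have finS: "finite S" using SV fin finite_subset by blast
  show ?thesis
  proof (rule exI[of _ S], intro conjI ballI)
    show "dominating_set V E S" by (rule Sd)
    fix s assume sS: "s \<in> S"
    show "\<exists>e\<in>V - S. E s e \<and> (\<forall>t\<in>S. E t e \<longrightarrow> t = s)"
    proof (rule ccontr)
      assume nop: "\<not> ?thesis"
      have "\<not> dominating_set V E (S - {s})"
      proof
        assume "dominating_set V E (S - {s})"
        then have "card S0 \<le> card (S - {s})" by (rule S0min)
        moreover have "card (S - {s}) < card S" using finS sS by (rule card_Diff1_less)
        ultimately show False using cS by simp
      qed
      then obtain v where v: "v \<in> V" "v \<notin> S - {s}" "\<forall>u\<in>S - {s}. \<not> E u v"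
        using SV unfolding dominating_set_def by blast
      have vs: "v = s"
      proof (rule ccontr)
        assume "v \<noteq> s"
        then have "v \<notin> S" using v by blast
        then obtain u where "u \<in> S" "E u v" using Sd v unfolding dominating_set_def by blast
        then have "u = s" using v by blast
        then show False using nop v \<open>v \<notin> S\<close> \<open>E u v\<close> by blast
      qed
      have siso: "\<forall>u\<in>S. \<not> E u s" using v vs irr by blast
      obtain t where st: "E s t" using noiso sS SV by blast
      have tS: "t \<notin> S" using siso st sym by blast
      have tV: "t \<in> V" using inV st by blast
      obtain t' where t': "t' \<in> S" "E t' t" "t' \<noteq> s" using nop tS tV st by blast
      define S' where "S' = insert t (S - {s})"
      have dS': "dominating_set V E S'"
        unfolding dominating_set_def
      proof (intro conjI ballI)
        show "S' \<subseteq> V" using SV tV unfolding S'_def by blast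
        fix w assume wV: "w \<in> V"
        show "w \<in> S' \<or> (\<exists>u\<in>S'. E u w)"
        proof (cases "w = s")
          case True then show ?thesis using st sym unfolding S'_def by blast
        next
          case False
          from Sd wV have "w \<in> S \<or> (\<exists>u\<in>S. E u w)" unfolding dominating_set_def by blast
          then show ?thesis
          proof
            assume "w \<in> S" then show ?thesis using False unfolding S'_def by blast
          next
            assume "\<exists>u\<in>S. E u w"
            then obtain u where u: "u \<in> S" "E u w" by blast
            show ?thesis
            proof (cases "u = s")
              case False then show ?thesis using u unfolding S'_def by blast
            next
              case True
              show ?thesis
              proof (cases "w \<in> S")
                case True then show ?thesis using \<open>w \<noteq> s\<close> unfolding S'_def by blast
              next
                case wn: False
                then obtain t'' where "t'' \<in> S" "E t'' w" "t'' \<noteq> s"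
                  using nop wV u True by blast
                then show ?thesis unfolding S'_def by blast
              qed
            qed
          qed
        qed
      qed
      have "card S' = card S" unfolding S'_def using finS sS tS
        by (simp add: card_gt_0_iff) (metis One_nat_def Suc_pred card_gt_0_iff empty_iff)
      then have "P S'" using dS' cS unfolding P_def by simp
      then have le: "ec S' \<le> ec S" by (rule Smax)
      have sub: "{p \<in> S \<times> S. E (fst p) (snd p)} \<subset> {p \<in> S' \<times> S'. E (fst p) (snd p)}"
      proof
        show "{p \<in> S \<times> S. E (fst p) (snd p)} \<subseteq> {p \<in> S' \<times> S'. E (fst p) (snd p)}"
          using siso sym unfolding S'_def by auto
        have "(t', t) \<in> {p \<in> S' \<times> S'. E (fst p) (snd p)}" using t' unfolding S'_def by auto
        moreover have "(t', t) \<notin> {p \<in> S \<times> S. E (fst p) (snd p)}" using tS by auto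
        ultimately show "{p \<in> S \<times> S. E (fst p) (snd p)} \<noteq> {p \<in> S' \<times> S'. E (fst p) (snd p)}" by blast
      qed
      have "finite S'" using finS unfolding S'_def by simp
      then have "ec S < ec S'" unfolding ec_def
        by (intro psubset_card_mono[OF _ sub]) (simp add: finite_cartesian_product)
      then show False using le by simp
    qed
  qed
qed
lemma remove_ok:
  assumes "dominating_set W R D" "p \<in> D"
    and "\<And>c. c \<in> W \<Longrightarrow> c \<notin> D - {p} \<Longrightarrow> c = p \<or> R p c \<Longrightarrow> \<exists>q\<in>D - {p}. R q c"
  shows "dominating_set W R (D - {p})"
  using assms unfolding dominating_set_def by blast

context
  fixes m :: nat and V :: "'a set" and E :: "'a \<Rightarrow> 'a \<Rightarrow> bool"
  assumes m2: "m \<ge> 2" and sg: "simple_graph V E" and cVm: "card V \<le> m"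
begin

abbreviation "GV \<equiv> cart_verts (K_verts m) V"
abbreviation "GE \<equiv> cart_adj (K_verts m) (K_adj m) V E"

lemma finV: "finite V" using sg unfolding simple_graph_def by blast
lemma symE: "E x y \<Longrightarrow> E y x" using sg unfolding simple_graph_def by blast
lemma irrE: "\<not> E x x" using sg unfolding simple_graph_def by blast
lemma inVE: "E x y \<Longrightarrow> x \<in> V \<and> y \<in> V" using sg unfolding simple_graph_def by blast

lemma GV_mem[simp]: "(i,x) \<in> GV \<longleftrightarrow> i < m \<and> x \<in> V"
  by (simp add: cart_verts_def K_verts_def)

lemma GE_iff[simp]: "GE (i,x) (j,y) \<longleftrightarrow> (i = j \<and> i < m \<and> E x y) \<or> (x = y \<and> x \<in> V \<and> i < m \<and> j < m \<and> i \<noteq> j)"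
  by (auto simp: cart_adj_def K_verts_def K_adj_def)

lemma finGV: "finite GV" using finV by (simp add: cart_verts_def K_verts_def)

lemma dom_sub: "dominating_set GV GE D \<Longrightarrow> D \<subseteq> GV"
  unfolding dominating_set_def by blast

lemma rows_hit:
  assumes "dominating_set GV GE D" "h \<in> V" "h \<notin> snd ` D" "i < m"
  shows "\<exists>y. (i,y) \<in> D \<and> E y h"
proof -
  have "(i,h) \<in> GV" using assms by simp
  moreover have "(i,h) \<notin> D" using assms(3) by force
  ultimately obtain q where q: "q \<in> D" "GE q (i,h)" using assms(1) unfolding dominating_set_def by blast
  obtain i' y where qq: "q = (i',y)" by force
  have "y \<noteq> h" using q qq assms(3) by force
  then show ?thesis using q qq by auto
qed

lemma dom_lower:
  assumes "dominating_set GV GE D"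
  shows "card V \<le> card D"
proof -
  have finD: "finite D" using dom_sub[OF assms] finGV finite_subset by blast
  show ?thesis
  proof (cases "V \<subseteq> snd ` D")
    case True
    then have "card V \<le> card (snd ` D)" using finD by (intro card_mono) auto
    also have "\<dots> \<le> card D" using finD by (rule card_image_le)
    finally show ?thesis .
  next
    case False
    then obtain h where h: "h \<in> V" "h \<notin> snd ` D" by blast
    have "{..<m} \<subseteq> fst ` D"
    proof
      fix i assume "i \<in> {..<m}"
      then obtain y where "(i,y) \<in> D" using rows_hit[OF assms h] by auto
      then show "i \<in> fst ` D" by force
    qed
    then have "m \<le> card (fst ` D)" using finD by (metis card_lessThan card_mono finite_imageI)
    also have "\<dots> \<le> card D" using finD by (rule card_image_le)
    finally show ?thesis using cVm by simp
  qed
qed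

lemma row0: "dominating_set GV GE ({0} \<times> V)"
  unfolding dominating_set_def
proof (intro conjI ballI)
  show "{0} \<times> V \<subseteq> GV" using m2 by auto
  fix c assume "c \<in> GV"
  then obtain i h where c: "c = (i,h)" "i < m" "h \<in> V" by (cases c) auto
  show "c \<in> {0} \<times> V \<or> (\<exists>u\<in>{0} \<times> V. GE u c)"
  proof (cases "i = 0")
    case True then show ?thesis using c by auto
  next
    case False
    then have "GE (0,h) (i,h)" using c m2 by auto
    then show ?thesis using c by blast
  qed
qed

lemma notwd:
  assumes "minimal_dominating_set GV GE D" "card V < card D"
  shows "\<not> well_dominated GV GE"
proof
  assume "well_dominated GV GE"
  then have "minimum_dominating_set GV GE D" using assms(1) unfolding well_dominated_def by blast
  then have "card D \<le> card ({0::nat} \<times> V)" using row0 unfolding minimum_dominating_set_def by blast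
  then show False using assms(2) by (simp add: card_cartesian_product)
qed

lemma wd:
  assumes "\<And>D. minimal_dominating_set GV GE D \<Longrightarrow> card D \<le> card V"
  shows "well_dominated GV GE"
  unfolding well_dominated_def minimum_dominating_set_def
proof (intro allI impI conjI)
  fix D D' assume "minimal_dominating_set GV GE D"
  then show "dominating_set GV GE D" unfolding minimal_dominating_set_def by blast
  assume "dominating_set GV GE D'"
  then have "card V \<le> card D'" by (rule dom_lower)
  then show "card D \<le> card D'" using assms[OF \<open>minimal_dominating_set GV GE D\<close>] by simp
qed

lemma col_case:
  assumes md: "minimal_dominating_set GV GE D" and cov: "V \<subseteq> snd ` D"
  shows "card D \<le> card V"
proof -
  have Dd: "dominating_set GV GE D" and nr: "\<And>p. p \<in> D \<Longrightarrow> \<not> dominating_set GV GE (D - {p})"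
    using md unfolding minimal_iff by blast+
  have DG: "D \<subseteq> GV" using dom_sub[OF Dd] .
  have "inj_on snd D"
  proof (rule inj_onI, rule ccontr)
    fix p q assume pq: "p \<in> D" "q \<in> D" "snd p = snd q" "p \<noteq> q"
    obtain i h where pp: "p = (i,h)" by (cases p)
    obtain j h2 where qq0: "q = (j,h2)" by (cases q)
    have qq: "q = (j,h)" using qq0 pp pq(3) by simp
    have ij: "i \<noteq> j" using pq(4) pp qq by simp
    have ph: "i < m" "h \<in> V" "j < m" using DG pq(1,2) pp qq by auto
    have "dominating_set GV GE (D - {p})"
    proof (rule remove_ok[OF Dd pq(1)])
      fix c assume c: "c \<in> GV" "c \<notin> D - {p}" "c = p \<or> GE p c"
      obtain i' h' where cc: "c = (i',h')" by (cases c)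
      have c': "i' < m" "h' \<in> V" using c(1) cc by auto
      have qD: "q \<in> D - {p}" using pq by simp
      show "\<exists>q\<in>D - {p}. GE q c"
      proof (cases "c = p")
        case True
        have "GE q c" using True pp qq ij ph by simp
        then show ?thesis using qD by blast
      next
        case False
        then have "GE (i,h) (i',h')" using False c(3) cc pp by auto
        then consider (r) "i' = i" "E h h'" | (k) "h' = h" "i \<noteq> i'" by auto
        then show ?thesis
        proof cases
          case r
          obtain l where l: "(l,h') \<in> D" using cov c'(2) by force
          have "h' \<noteq> h" using r irrE by blast
          then have lp: "(l,h') \<in> D - {p}" using l pp by simp
          have "l \<noteq> i" using lp c(2) cc r by auto
          moreover have "l < m" using l DG by auto
          ultimately have "GE (l,h') c" using cc r c' ph by simp
          then show ?thesis using lp by blast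
        next
          case k
          have "i' \<noteq> j" using k c(2) cc qD qq by auto
          then have "GE q c" using k ij ph c' cc qq by simp
          then show ?thesis using qD by blast
        qed
      qed
    qed
    then show False using nr pq(1) by blast
  qed
  then have "card D = card (snd ` D)" by (simp add: card_image)
  also have "\<dots> \<le> card V" using DG finV by (intro card_mono) auto
  finally show ?thesis .
qed


lemma other_row: "i < m \<Longrightarrow> \<exists>l<m. l \<noteq> i"
  using m2 by (intro exI[of _ "if i = 0 then 1 else 0"]) auto

lemma complete_case:
  assumes cpl: "\<forall>x\<in>V. \<forall>y\<in>V. E x y \<longleftrightarrow> x \<noteq> y"
    and md: "minimal_dominating_set GV GE D" and h0: "h0 \<in> V" "h0 \<notin> snd ` D"
  shows "card D \<le> m"
proof -
  have Dd: "dominating_set GV GE D" and nr: "\<And>p. p \<in> D \<Longrightarrow> \<not> dominating_set GV GE (D - {p})"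
    using md unfolding minimal_iff by blast+
  have DG: "D \<subseteq> GV" using dom_sub[OF Dd] .
  have "inj_on fst D"
  proof (rule inj_onI, rule ccontr)
    fix p q assume pq: "p \<in> D" "q \<in> D" "fst p = fst q" "p \<noteq> q"
    obtain i x where pp: "p = (i,x)" by (cases p)
    obtain i2 y where qq0: "q = (i2,y)" by (cases q)
    have qq: "q = (i,y)" using qq0 pp pq(3) by simp
    have xy: "x \<noteq> y" using pq(4) pp qq by simp
    have ph: "i < m" "x \<in> V" "y \<in> V" using DG pq(1,2) pp qq by auto
    have qD: "q \<in> D - {p}" using pq by simp
    have "dominating_set GV GE (D - {p})"
    proof (rule remove_ok[OF Dd pq(1)])
      fix c assume c: "c \<in> GV" "c \<notin> D - {p}" "c = p \<or> GE p c"
      obtain i' h' where cc: "c = (i',h')" by (cases c)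
      have c': "i' < m" "h' \<in> V" using c(1) cc by auto
      show "\<exists>q\<in>D - {p}. GE q c"
      proof (cases "c = p")
        case True
        have "E y x" using cpl ph xy by auto
        then have "GE q c" using True pp qq ph by simp
        then show ?thesis using qD by blast
      next
        case False
        then have "GE (i,x) (i',h')" using False c(3) cc pp by auto
        then consider (r) "i' = i" "E x h'" | (k) "h' = x" "i \<noteq> i'" by auto
        then show ?thesis
        proof cases
          case r
          have "h' \<noteq> y" using r c(2) cc qD qq by auto
          then have "E y h'" using cpl ph c' by auto
          then have "GE q c" using r cc qq ph by simp
          then show ?thesis using qD by blast
        next
          case k
          obtain z where z: "(i',z) \<in> D" "E z h0" using rows_hit[OF Dd h0 c'(1)] by blast
          have zp: "(i',z) \<in> D - {p}" using z k pp by auto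
          have "z \<noteq> x" using zp c(2) cc k by auto
          moreover have "z \<in> V" using z(2) inVE by blast
          ultimately have "E z x" using cpl ph by auto
          then have "GE (i',z) c" using k cc c' by simp
          then show ?thesis using zp by blast
        qed
      qed
    qed
    then show False using nr pq(1) by blast
  qed
  then have "card D = card (fst ` D)" by (simp add: card_image)
  also have "\<dots> \<le> card {..<m}" using DG by (intro card_mono) (auto simp: cart_verts_def K_verts_def)
  finally show ?thesis by simp
qed

lemma p3_case:
  assumes V3: "V = {a,u,b}" and dst: "a \<noteq> u" "a \<noteq> b" "u \<noteq> b"
    and Ech: "\<And>x y. E x y \<longleftrightarrow> (x = a \<and> y = u) \<or> (x = u \<and> y = a) \<or> (x = u \<and> y = b) \<or> (x = b \<and> y = u)"
    and md: "minimal_dominating_set GV GE D" and h0: "h0 \<in> V" "h0 \<notin> snd ` D"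
  shows "card D \<le> m"
proof -
  have Dd: "dominating_set GV GE D" and nr: "\<And>p. p \<in> D \<Longrightarrow> \<not> dominating_set GV GE (D - {p})"
    using md unfolding minimal_iff by blast+
  have DG: "D \<subseteq> GV" using dom_sub[OF Dd] .
  have "inj_on fst D"
  proof (rule inj_onI, rule ccontr)
    fix p q assume pq: "p \<in> D" "q \<in> D" "fst p = fst q" "p \<noteq> q"
    obtain i x where pp: "p = (i,x)" by (cases p)
    obtain i2 y where qq0: "q = (i2,y)" by (cases q)
    have qq: "q = (i,y)" using qq0 pp pq(3) by simp
    have xy: "x \<noteq> y" using pq(4) pp qq by simp
    have ph: "i < m" "x \<in> V" "y \<in> V" using DG pq(1,2) pp qq by auto
    have xh: "x \<noteq> h0" "y \<noteq> h0" using h0(2) pq(1,2) pp qq by force+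
    have remove: "\<exists>r\<in>D. dominating_set GV GE (D - {r})"
    proof (cases "h0 = u")
      case True
      then have xyab: "x \<in> {a,b}" "y \<in> {a,b}" using xh ph V3 by auto
      obtain l where l: "l < m" "l \<noteq> i" using other_row[OF ph(1)] by blast
      obtain z where z: "(l,z) \<in> D" "E z h0" using rows_hit[OF Dd h0 l(1)] by blast
      have zab: "z \<in> {a,b}" using z(2) True Ech dst by auto
      have zV: "z \<in> V" using z(2) inVE by blast
      define w2 where "w2 = (if z = a then b else a)"
      have both: "(i,a) \<in> D" "(i,b) \<in> D"
        using xyab xy pq(1,2) pp qq by auto
      have zo: "(i,z) \<in> D" "(i,w2) \<in> D" "z \<noteq> w2" "w2 \<in> {a,b}"
        using both zab dst unfolding w2_def by auto
      have "dominating_set GV GE (D - {(i,z)})"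
      proof (rule remove_ok[OF Dd zo(1)])
        fix c assume c: "c \<in> GV" "c \<notin> D - {(i,z)}" "c = (i,z) \<or> GE (i,z) c"
        obtain i' h' where cc: "c = (i',h')" by (cases c)
        have c': "i' < m" "h' \<in> V" using c(1) cc by auto
        show "\<exists>q\<in>D - {(i,z)}. GE q c"
        proof (cases "c = (i,z)")
          case True
          have "GE (l,z) c" using True l ph zV by simp
          then show ?thesis using z l by force
        next
          case False
          then have "GE (i,z) (i',h')" using c(3) cc by auto
          then consider (r) "i' = i" "E z h'" | (k) "h' = z" "i \<noteq> i'" by auto
          then show ?thesis
          proof cases
            case r
            have "h' = u" using r zab Ech dst by auto
            moreover have "E w2 u" using zo(4) Ech by auto
            ultimately have "GE (i,w2) c" using r cc ph by simp
            then show ?thesis using zo by force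
          next
            case k
            have "i' \<noteq> l" using k c(2) cc z l by auto
            then have "GE (l,z) c" using k cc l c' by auto
            then show ?thesis using z l by force
          qed
        qed
      qed
      then show ?thesis using zo by blast
    next
      case False
      have hab: "h0 = a \<or> h0 = b" using False h0 V3 by auto
      obtain l1 l2 where ll: "l1 = a \<and> l2 = b \<or> l1 = b \<and> l2 = a" "l1 \<noteq> l2" "h0 = l1"
      proof (cases "h0 = a")
        case True then show ?thesis using that[of a b] dst by auto
      next
        case False then show ?thesis using that[of b a] dst hab by auto
      qed
      have nb1: "\<And>z. E z l1 \<Longrightarrow> z = u" using ll Ech dst by auto
      have nb2: "\<And>z. E l2 z \<Longrightarrow> z = u" using ll Ech dst by auto
      have e2: "E u l2" using ll Ech dst by auto
      have colu: "\<And>j. j < m \<Longrightarrow> (j,u) \<in> D"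
      proof -
        fix j assume "j < m"
        obtain z where z: "(j,z) \<in> D" "E z h0" using rows_hit[OF Dd h0 \<open>j < m\<close>] by blast
        then show "(j,u) \<in> D" using nb1 ll by auto
      qed
      have "x \<in> {u,l2}" "y \<in> {u,l2}" using xh ph V3 ll by auto
      then have il2: "(i,l2) \<in> D" using xy pq(1,2) pp qq by auto
      have "dominating_set GV GE (D - {(i,l2)})"
      proof (rule remove_ok[OF Dd il2])
        fix c assume c: "c \<in> GV" "c \<notin> D - {(i,l2)}" "c = (i,l2) \<or> GE (i,l2) c"
        obtain i' h' where cc: "c = (i',h')" by (cases c)
        have c': "i' < m" "h' \<in> V" using c(1) cc by auto
        show "\<exists>q\<in>D - {(i,l2)}. GE q c"
        proof (cases "c = (i,l2)")
          case True
          have "GE (i,u) c" using True ph e2 by auto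
          moreover have "(i,u) \<in> D - {(i,l2)}" using colu ph ll dst by auto
          ultimately show ?thesis by blast
        next
          case False
          then have "GE (i,l2) (i',h')" using c(3) cc by auto
          then consider (r) "i' = i" "E l2 h'" | (k) "h' = l2" "i \<noteq> i'" by auto
          then show ?thesis
          proof cases
            case r
            then have "c = (i,u)" using nb2 cc by auto
            moreover have "(i,u) \<in> D - {(i,l2)}" using colu ph ll dst by auto
            ultimately show ?thesis using c(2) by blast
          next
            case k
            have "GE (i',u) c" using k cc c' e2 by auto
            moreover have "(i',u) \<in> D - {(i,l2)}" using colu c' k by auto
            ultimately show ?thesis by blast
          qed
        qed
      qed
      then show ?thesis using il2 by blast
    qed
    then show False using nr by blast
  qed
  then have "card D = card (fst ` D)" by (simp add: card_image)
  also have "\<dots> \<le> card {..<m}" using DG by (intro card_mono) (auto simp: cart_verts_def K_verts_def)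
  finally show ?thesis by simp
qed

lemma epd_min:
  assumes Sd: "dominating_set V E S"
    and ep: "\<forall>s\<in>S. \<exists>e\<in>V - S. E s e \<and> (\<forall>t\<in>S. E t e \<longrightarrow> t = s)"
  shows "minimal_dominating_set GV GE ({..<m} \<times> S)"
  unfolding minimal_iff
proof (intro conjI ballI)
  have SV: "S \<subseteq> V" using Sd unfolding dominating_set_def by blast
  show "dominating_set GV GE ({..<m} \<times> S)"
    unfolding dominating_set_def
  proof (intro conjI ballI)
    show "{..<m} \<times> S \<subseteq> GV"
    proof
      fix c assume "c \<in> {..<m} \<times> S"
      then obtain i s where "c = (i,s)" "i < m" "s \<in> S" by blast
      then show "c \<in> GV" using SV by auto
    qed
    fix c assume "c \<in> GV"
    then obtain i h where c: "c = (i,h)" "i < m" "h \<in> V" by (cases c) auto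
    show "c \<in> {..<m} \<times> S \<or> (\<exists>u\<in>{..<m} \<times> S. GE u c)"
    proof (cases "h \<in> S")
      case True then show ?thesis using c by auto
    next
      case False
      then obtain s where "s \<in> S" "E s h" using Sd c unfolding dominating_set_def by blast
      then have "GE (i,s) c" "(i,s) \<in> {..<m} \<times> S" using c by auto
      then show ?thesis by blast
    qed
  qed
  fix p assume p: "p \<in> {..<m} \<times> S"
  obtain i s where ps0: "p = (i,s)" by (cases p)
  have ps: "p = (i,s)" "i < m" "s \<in> S" using p ps0 by simp_all
  have "\<exists>e\<in>V - S. E s e \<and> (\<forall>t\<in>S. E t e \<longrightarrow> t = s)" using ep ps(3) by (rule bspec)
  then obtain e where e: "e \<in> V" "e \<notin> S" "E s e" "\<forall>t\<in>S. E t e \<longrightarrow> t = s" by blast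
  show "\<not> dominating_set GV GE ({..<m} \<times> S - {p})"
  proof
    assume dd: "dominating_set GV GE ({..<m} \<times> S - {p})"
    have ieG: "(i,e) \<in> GV" using ps(2) e(1) by simp
    have ieD: "(i,e) \<notin> {..<m} \<times> S - {p}" using e(2) by simp
    have "(i,e) \<in> {..<m} \<times> S - {p} \<or> (\<exists>q\<in>{..<m} \<times> S - {p}. GE q (i,e))"
      using dd ieG unfolding dominating_set_def by (elim conjE) (erule bspec)
    then obtain q where q: "q \<in> {..<m} \<times> S - {p}" "GE q (i,e)" using ieD by blast
    obtain j t where qq: "q = (j,t)" by (cases q)
    have tS: "t \<in> S" using q(1) qq by simp
    have jt: "(j,t) \<noteq> (i,s)" using q(1) qq ps(1) by simp
    have "(j = i \<and> j < m \<and> E t e) \<or> (t = e \<and> t \<in> V \<and> j < m \<and> i < m \<and> j \<noteq> i)"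
      using q(2) qq by simp
    then show False
    proof
      assume "j = i \<and> j < m \<and> E t e"
      then have "t = s" "j = i" using e(4) tS by blast+
      then show False using jt by simp
    next
      assume "t = e \<and> t \<in> V \<and> j < m \<and> i < m \<and> j \<noteq> i"
      then show False using tS e(2) by simp
    qed
  qed
qed


lemma a4:
  assumes cV: "card V = m" and m4: "m \<ge> 4" and uV: "u \<in> V" and univ: "\<forall>v\<in>V. v \<noteq> u \<longrightarrow> E u v"
    and ab: "a \<in> V" "b \<in> V" "a \<noteq> b" "\<not> E a b"
  shows "\<exists>D. minimal_dominating_set GV GE D \<and> card V < card D"
proof -
  have au: "a \<noteq> u"
  proof
    assume "a = u" then have "E u b" using univ ab by auto
    then show False using ab \<open>a = u\<close> by simp
  qed
  have bu: "b \<noteq> u"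
  proof
    assume "b = u" then have "E u a" using univ ab by auto
    then show False using ab \<open>b = u\<close> symE by blast
  qed
  have Eua: "E a u" "E b u" using univ ab au bu symE by blast+
  define W where "W = V - {a,b,u}"
  have Wmem: "\<And>w. w \<in> W \<longleftrightarrow> w \<in> V \<and> w \<noteq> a \<and> w \<noteq> b \<and> w \<noteq> u" unfolding W_def by auto
  have finW: "finite W" using finV unfolding W_def by simp
  have "card W = card V - card {a,b,u}" unfolding W_def
    using finV ab uV by (intro card_Diff_subset) auto
  moreover have "card {a,b,u} = 3" using ab au bu by simp
  ultimately have cW: "card W = m - 3" using cV by simp
  then have Wpos: "0 < card W" using m4 by simp
  obtain h where h: "bij_betw h {0..<card W} W" using ex_bij_betw_nat_finite[OF finW] by blast
  define g where "g j = (if j - 1 < card W then h (j - 1) else h 0)" for j :: nat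
  have gW: "\<And>j. g j \<in> W"
  proof -
    fix j
    have "\<And>k. k < card W \<Longrightarrow> h k \<in> W" using bij_betw_apply[OF h] by simp
    then show "g j \<in> W" unfolding g_def using Wpos by auto
  qed
  have gsurj: "\<And>w. w \<in> W \<Longrightarrow> \<exists>j. 1 \<le> j \<and> j < m \<and> g j = w"
  proof -
    fix w assume "w \<in> W"
    then have "w \<in> h ` {0..<card W}" using bij_betw_imp_surj_on[OF h] by simp
    then obtain k where k: "k < card W" "h k = w" by auto
    then show "\<exists>j. 1 \<le> j \<and> j < m \<and> g j = w" using cW
      by (intro exI[of _ "Suc k"]) (auto simp: g_def)
  qed
  define Gr where "Gr = (\<lambda>j. (j, g j)) ` {1..<m}"
  define D where "D = {(0,a),(0,b)} \<union> Gr"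
  have memGr: "\<And>j y. (j,y) \<in> Gr \<longleftrightarrow> 1 \<le> j \<and> j < m \<and> y = g j" unfolding Gr_def by auto
  have memD: "\<And>j y. (j,y) \<in> D \<longleftrightarrow> (j = 0 \<and> (y = a \<or> y = b)) \<or> (1 \<le> j \<and> j < m \<and> y = g j)"
    unfolding D_def using memGr by auto
  have cGr: "card Gr = m - 1" unfolding Gr_def by (subst card_image) (auto simp: inj_on_def)
  have dj: "{(0::nat,a),(0,b)} \<inter> Gr = {}" using memGr by auto
  have "card D = card {(0::nat,a),(0,b)} + card Gr" unfolding D_def
    using dj by (intro card_Un_disjoint) (auto simp: Gr_def)
  then have cD: "card D = m + 1" using cGr ab m4 by simp
  have notdom: "\<And>c D'. c \<in> GV \<Longrightarrow> c \<notin> D' \<Longrightarrow> (\<forall>q\<in>D'. \<not> GE q c) \<Longrightarrow> \<not> dominating_set GV GE D'"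
    unfolding dominating_set_def by blast
  have "minimal_dominating_set GV GE D"
    unfolding minimal_iff
  proof (intro conjI ballI)
    show "dominating_set GV GE D"
      unfolding dominating_set_def
    proof (intro conjI ballI)
      show "D \<subseteq> GV"
      proof
        fix c assume "c \<in> D"
        then obtain j y where c: "c = (j,y)" "(j,y) \<in> D" by (cases c) auto
        then show "c \<in> GV" using memD[of j y] gW Wmem ab m4 by auto
      qed
      fix c assume "c \<in> GV"
      then obtain i x where c: "c = (i,x)" "i < m" "x \<in> V" by (cases c) auto
      show "c \<in> D \<or> (\<exists>q\<in>D. GE q c)"
      proof (cases "x = a \<or> x = b")
        case True
        then have "(0,x) \<in> D" using memD by auto
        show ?thesis
        proof (cases "i = 0")
          case True then show ?thesis using c \<open>(0,x) \<in> D\<close> by simp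
        next
          case False
          then have "GE (0,x) c" using c m4 by auto
          then show ?thesis using \<open>(0,x) \<in> D\<close> by blast
        qed
      next
        case nab: False
        show ?thesis
        proof (cases "x = u")
          case True
          show ?thesis
          proof (cases "i = 0")
            case True
            then have "GE (0,a) c" using c \<open>x = u\<close> Eua by auto
            then show ?thesis using memD by auto
          next
            case False
            have "g i \<in> V" "g i \<noteq> u" using gW[of i] by (simp_all add: Wmem)
            then have "E u (g i)" using univ by blast
            then have "E (g i) u" by (rule symE)
            then have "GE (i, g i) c" using c \<open>x = u\<close> by auto
            moreover have "(i, g i) \<in> D" using memD False c by auto
            ultimately show ?thesis by blast
          qed
        next
          case False
          then have "x \<in> W" using nab c Wmem by auto
          then obtain j where j: "1 \<le> j" "j < m" "g j = x" using gsurj by blast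
          then have jD: "(j,x) \<in> D" using memD by auto
          show ?thesis
          proof (cases "i = j")
            case True then show ?thesis using jD c by auto
          next
            case False
            then have "GE (j,x) c" using c j by auto
            then show ?thesis using jD by blast
          qed
        qed
      qed
    qed
    fix p assume pD: "p \<in> D"
    then obtain j y where pp: "p = (j,y)" by (cases p)
    have pD': "(j,y) \<in> D" using pD pp by simp
    show "\<not> dominating_set GV GE (D - {p})"
    proof (cases "j = 0")
      case True
      then have y: "y = a \<or> y = b" using pD' memD by auto
      show ?thesis
      proof (rule notdom[of "(0,y)"])
        show "(0,y) \<in> GV" using y ab m4 by auto
        show "(0,y) \<notin> D - {p}" using pp True by simp
        show "\<forall>q\<in>D - {p}. \<not> GE q (0,y)"
        proof (intro ballI notI)
          fix q assume q: "q \<in> D - {p}" "GE q (0,y)"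
          obtain j' y' where qq: "q = (j',y')" by (cases q)
          have qD: "(j',y') \<in> D" "(j',y') \<noteq> (0,y)" using q qq pp True by auto
          from q(2) qq have "(j' = 0 \<and> E y' y) \<or> (y' = y \<and> j' \<noteq> 0)" by auto
          then show False
          proof
            assume "j' = 0 \<and> E y' y"
            then have "y' = a \<or> y' = b" using qD memD by auto
            then show False using \<open>j' = 0 \<and> E y' y\<close> y ab irrE symE by blast
          next
            assume "y' = y \<and> j' \<noteq> 0"
            then have "g j' = y" using qD memD by auto
            then show False using gW[of j'] Wmem y by auto
          qed
        qed
      qed
    next
      case False
      then have jy: "1 \<le> j" "j < m" "y = g j" using pD' memD by auto
      show ?thesis
      proof (rule notdom[of "(j,u)"])
        show "(j,u) \<in> GV" using jy uV by auto
        show "(j,u) \<notin> D - {p}" using memD[of j u] gW[of j] Wmem False by auto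
        show "\<forall>q\<in>D - {p}. \<not> GE q (j,u)"
        proof (intro ballI notI)
          fix q assume q: "q \<in> D - {p}" "GE q (j,u)"
          obtain j' y' where qq: "q = (j',y')" by (cases q)
          have qD: "(j',y') \<in> D" "(j',y') \<noteq> (j,y)" using q qq pp by auto
          from q(2) qq have "(j' = j \<and> E y' u) \<or> (y' = u)" by auto
          then show False
          proof
            assume "j' = j \<and> E y' u"
            then have "y' = g j" using qD memD False by auto
            then show False using qD jy \<open>j' = j \<and> E y' u\<close> by auto
          next
            assume "y' = u"
            then show False using qD memD[of j' y'] gW[of j'] Wmem au bu by auto
          qed
        qed
      qed
    qed
  qed
  then show ?thesis using cD cV by auto
qed

end

lemma iso_K:
  assumes "graph_iso V E (K_verts n) (K_adj n)"
  shows "card V = n \<and> (\<forall>x\<in>V. \<forall>y\<in>V. E x y \<longleftrightarrow> x \<noteq> y)"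
proof -
  obtain f where f: "bij_betw f V {..<n}" "\<forall>x\<in>V. \<forall>y\<in>V. E x y \<longleftrightarrow> K_adj n (f x) (f y)"
    using assms unfolding graph_iso_def K_verts_def by blast
  have "card V = n" using bij_betw_same_card[OF f(1)] by simp
  moreover have "\<forall>x\<in>V. \<forall>y\<in>V. E x y \<longleftrightarrow> x \<noteq> y"
  proof (intro ballI)
    fix x y assume xy: "x \<in> V" "y \<in> V"
    have "f x < n" "f y < n" using f(1) xy unfolding bij_betw_def by auto
    moreover have "f x = f y \<longleftrightarrow> x = y" using f(1) xy unfolding bij_betw_def inj_on_def by auto
    ultimately show "E x y \<longleftrightarrow> x \<noteq> y" using f(2) xy unfolding K_adj_def by auto
  qed
  ultimately show ?thesis by blast
qed

lemma K_iso:
  assumes fin: "finite V" and c: "card V = n" and cpl: "\<forall>x\<in>V. \<forall>y\<in>V. E x y \<longleftrightarrow> x \<noteq> y"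
  shows "graph_iso V E (K_verts n) (K_adj n)"
proof -
  obtain f where f: "bij_betw f V {0..<card V}" using ex_bij_betw_finite_nat[OF fin] by blast
  then have f': "bij_betw f V {..<n}" using c by (simp add: atLeast0LessThan)
  have "\<forall>x\<in>V. \<forall>y\<in>V. E x y \<longleftrightarrow> K_adj n (f x) (f y)"
  proof (intro ballI)
    fix x y assume xy: "x \<in> V" "y \<in> V"
    have "f x < n" "f y < n" using f' xy unfolding bij_betw_def by auto
    moreover have "f x = f y \<longleftrightarrow> x = y" using f' xy unfolding bij_betw_def inj_on_def by auto
    ultimately show "E x y \<longleftrightarrow> K_adj n (f x) (f y)" using cpl xy unfolding K_adj_def by auto
  qed
  then show ?thesis unfolding graph_iso_def K_verts_def using f' by blast
qed

lemma iso_P3: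
  assumes sg: "simple_graph V E" and iso: "graph_iso V E P3_verts P3_adj"
  shows "\<exists>a u b. V = {a,u,b} \<and> a \<noteq> u \<and> a \<noteq> b \<and> u \<noteq> b \<and>
    (\<forall>x y. E x y \<longleftrightarrow> (x = a \<and> y = u) \<or> (x = u \<and> y = a) \<or> (x = u \<and> y = b) \<or> (x = b \<and> y = u))"
proof -
  obtain f where f: "bij_betw f V {0,1,2}" "\<forall>x\<in>V. \<forall>y\<in>V. E x y \<longleftrightarrow> P3_adj (f x) (f y)"
    using iso unfolding graph_iso_def P3_verts_def by blast
  have img: "f ` V = {0,1,2}" using bij_betw_imp_surj_on[OF f(1)] .
  have i0: "(0::nat) \<in> f ` V" and i1: "(1::nat) \<in> f ` V" and i2: "(2::nat) \<in> f ` V" using img by auto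
  obtain a where a: "a \<in> V" "f a = 0" using i0 by force
  obtain u where u: "u \<in> V" "f u = 1" using i1 by force
  obtain b where b: "b \<in> V" "f b = 2" using i2 by force
  have dst: "a \<noteq> u" "a \<noteq> b" "u \<noteq> b" using a u b by auto
  have injf: "inj_on f V" using f(1) unfolding bij_betw_def by blast
  have V3: "V = {a,u,b}"
  proof
    show "{a,u,b} \<subseteq> V" using a u b by auto
    show "V \<subseteq> {a,u,b}"
    proof
      fix x assume x: "x \<in> V"
      then have "f x \<in> {0,1,2}" using img by blast
      then consider "f x = f a" | "f x = f u" | "f x = f b" using a u b by auto
      then show "x \<in> {a,u,b}"
      proof cases
        case 1 then show ?thesis using inj_onD[OF injf 1 x a(1)] by simp
      next
        case 2 then show ?thesis using inj_onD[OF injf 2 x u(1)] by simp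
      next
        case 3 then show ?thesis using inj_onD[OF injf 3 x b(1)] by simp
      qed
    qed
  qed
  have inV: "\<And>x y. E x y \<Longrightarrow> x \<in> V \<and> y \<in> V" using sg unfolding simple_graph_def by blast
  have "\<forall>x y. E x y \<longleftrightarrow> (x = a \<and> y = u) \<or> (x = u \<and> y = a) \<or> (x = u \<and> y = b) \<or> (x = b \<and> y = u)"
  proof (intro allI)
    fix x y
    show "E x y \<longleftrightarrow> (x = a \<and> y = u) \<or> (x = u \<and> y = a) \<or> (x = u \<and> y = b) \<or> (x = b \<and> y = u)"
    proof (cases "x \<in> V \<and> y \<in> V")
      case True
      have e: "E x y \<longleftrightarrow> P3_adj (f x) (f y)" using f(2) True by blast
      have "x = a \<or> x = u \<or> x = b" "y = a \<or> y = u \<or> y = b" using True V3 by auto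
      then show ?thesis using e a u b dst unfolding P3_adj_def by (elim disjE) simp_all
    next
      case False
      then show ?thesis using inV a u b by auto
    qed
  qed
  then show ?thesis using V3 dst by (intro exI[of _ a] exI[of _ u] exI[of _ b]) simp
qed

lemma P3_iso:
  assumes V3: "V = {a,u,b}" and dst: "a \<noteq> u" "a \<noteq> b" "u \<noteq> b"
    and Ech: "\<And>x y. E x y \<longleftrightarrow> (x = a \<and> y = u) \<or> (x = u \<and> y = a) \<or> (x = u \<and> y = b) \<or> (x = b \<and> y = u)"
  shows "graph_iso V E P3_verts P3_adj"
proof -
  define f where "f x = (if x = a then 0 else if x = u then 1 else (2::nat))" for x
  have fa: "f a = 0" "f u = 1" "f b = 2" unfolding f_def using dst by auto
  have "inj_on f {a,u,b}" unfolding inj_on_def using fa by auto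
  moreover have "f ` {a,u,b} = {0,1,2}" using fa by auto
  ultimately have "bij_betw f V {0,1,2}" unfolding bij_betw_def V3 by blast
  moreover have "\<forall>x\<in>V. \<forall>y\<in>V. E x y \<longleftrightarrow> P3_adj (f x) (f y)"
  proof (intro ballI)
    fix x y assume "x \<in> V" "y \<in> V"
    then have "x = a \<or> x = u \<or> x = b" "y = a \<or> y = u \<or> y = b" using V3 by auto
    then show "E x y \<longleftrightarrow> P3_adj (f x) (f y)" using fa dst unfolding P3_adj_def Ech
      by (elim disjE) simp_all
  qed
  ultimately show ?thesis unfolding graph_iso_def P3_verts_def by blast
qed


theorem proposition21:
  fixes m :: nat and V :: "'a set" and E :: "'a \<Rightarrow> 'a \<Rightarrow> bool"
  assumes "m \<ge> 2"
    and "simple_graph V E" and "connected_graph V E"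
    and "card V \<ge> 2" and "card V \<le> m"
  shows "well_dominated (cart_verts (K_verts m) V) (cart_adj (K_verts m) (K_adj m) V E)
    \<longleftrightarrow> (m = 2 \<and> graph_iso V E (K_verts 2) (K_adj 2))
      \<or> (m = 3 \<and> (graph_iso V E (K_verts 3) (K_adj 3) \<or> graph_iso V E P3_verts P3_adj))
      \<or> (m \<ge> 4 \<and> graph_iso V E (K_verts m) (K_adj m))"
proof -
  note m2 = assms(1) and sg = assms(2) and cVm = assms(5)
  have finV: "finite V" using sg unfolding simple_graph_def by blast
  have sym: "\<And>x y. E x y \<Longrightarrow> E y x" using sg unfolding simple_graph_def by blast
  have irr: "\<And>x. \<not> E x x" using sg unfolding simple_graph_def by blast
  have inV: "\<And>x y. E x y \<Longrightarrow> x \<in> V \<and> y \<in> V" using sg unfolding simple_graph_def by blast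
  have noiso: "\<forall>v\<in>V. \<exists>w. E v w"
  proof
    fix v assume v: "v \<in> V"
    have "\<exists>w\<in>V. w \<noteq> v"
    proof (rule ccontr)
      assume "\<not> (\<exists>w\<in>V. w \<noteq> v)"
      then have "V \<subseteq> {v}" by blast
      then have "card V \<le> 1" using card_mono[of "{v}" V] by simp
      then show False using assms(4) by simp
    qed
    then obtain w where w: "w \<in> V" "w \<noteq> v" by blast
    have "E\<^sup>*\<^sup>* v w" using assms(3) v w unfolding connected_graph_def by blast
    then show "\<exists>w. E v w"
      by (rule converse_rtranclpE) (use w in auto)
  qed
  show ?thesis
  proof
    assume WD: "well_dominated (cart_verts (K_verts m) V) (cart_adj (K_verts m) (K_adj m) V E)"
    obtain S where Sd: "dominating_set V E S" and ep: "\<forall>s\<in>S. \<exists>e\<in>V - S. E s e \<and> (\<forall>t\<in>S. E t e \<longrightarrow> t = s)"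
      using bc[OF sg noiso] by blast
    have SV: "S \<subseteq> V" using Sd unfolding dominating_set_def by blast
    have finS: "finite S" using SV finV finite_subset by blast
    have "V \<noteq> {}" using assms(4) by auto
    then obtain v0 where "v0 \<in> V" by blast
    then have "S \<noteq> {}" using Sd unfolding dominating_set_def by blast
    then have cS1: "card S \<ge> 1" using finS by (simp add: Suc_le_eq card_gt_0_iff)
    have md: "minimal_dominating_set (cart_verts (K_verts m) V) (cart_adj (K_verts m) (K_adj m) V E) ({..<m} \<times> S)"
      by (rule epd_min[OF m2 sg cVm Sd ep])
    have "\<not> card V < card ({..<m} \<times> S)"
      using notwd[OF m2 sg cVm md] WD by blast
    then have le: "m * card S \<le> card V" by (simp add: card_cartesian_product)
    have "m * 1 \<le> m * card S" using cS1 by (rule mult_le_mono2)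
    then have cV: "card V = m" using le cVm by linarith
    have "card S \<le> 1"
    proof (rule ccontr)
      assume "\<not> card S \<le> 1"
      then have "2 \<le> card S" by simp
      then have "m * 2 \<le> m * card S" by (rule mult_le_mono2)
      then show False using le cVm m2 by linarith
    qed
    then have "card S = 1" using cS1 by simp
    then obtain u where Su: "S = {u}" by (rule card_1_singletonE)
    have uV: "u \<in> V" using SV Su by blast
    have univ: "\<forall>v\<in>V. v \<noteq> u \<longrightarrow> E u v"
    proof (intro ballI impI)
      fix v assume "v \<in> V" "v \<noteq> u"
      then have "v \<notin> S" using Su by blast
      then obtain s where "s \<in> S" "E s v" using Sd \<open>v \<in> V\<close> unfolding dominating_set_def by blast
      then show "E u v" using Su by blast
    qed
    show "(m = 2 \<and> graph_iso V E (K_verts 2) (K_adj 2))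
      \<or> (m = 3 \<and> (graph_iso V E (K_verts 3) (K_adj 3) \<or> graph_iso V E P3_verts P3_adj))
      \<or> (m \<ge> 4 \<and> graph_iso V E (K_verts m) (K_adj m))"
    proof (cases "\<forall>x\<in>V. \<forall>y\<in>V. E x y \<longleftrightarrow> x \<noteq> y")
      case True
      have iso: "graph_iso V E (K_verts m) (K_adj m)" using K_iso[OF finV cV True] .
      consider "m = 2" | "m = 3" | "m \<ge> 4" using m2 by linarith
      then show ?thesis
      proof cases
        case 1 then show ?thesis using iso by simp
      next
        case 2 then show ?thesis using iso by simp
      next
        case 3 then show ?thesis using iso by simp
      qed
    next
      case False
      then obtain a b where ab0: "a \<in> V" "b \<in> V" "\<not> (E a b \<longleftrightarrow> a \<noteq> b)" by blast
      have ab: "a \<noteq> b" "\<not> E a b" using ab0 irr by auto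
      have au: "a \<noteq> u"
      proof
        assume "a = u" then have "E u b" using univ ab0 ab by auto
        then show False using ab \<open>a = u\<close> by simp
      qed
      have bu: "b \<noteq> u"
      proof
        assume "b = u" then have "E u a" using univ ab0 ab by auto
        then show False using ab \<open>b = u\<close> sym by blast
      qed
      show ?thesis
      proof (cases "m \<ge> 4")
        case True
        obtain D where "minimal_dominating_set (cart_verts (K_verts m) V) (cart_adj (K_verts m) (K_adj m) V E) D"
          "card V < card D"
          using a4[OF m2 sg cVm cV True uV univ ab0(1,2) ab] by blast
        then have False using notwd[OF m2 sg cVm] WD by blast
        then show ?thesis ..
      next
        case False
        have sub: "{a,u,b} \<subseteq> V" using ab0 uV by auto
        have c3: "card {a,u,b} = 3" using ab au bu by simp
        then have "3 \<le> card V" using card_mono[OF finV sub] by simp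
        then have m3: "m = 3" using False cV by simp
        have V3: "V = {a,u,b}" using card_subset_eq[OF finV sub] c3 cV m3 by simp
        have Ech: "\<And>x y. E x y \<longleftrightarrow> (x = a \<and> y = u) \<or> (x = u \<and> y = a) \<or> (x = u \<and> y = b) \<or> (x = b \<and> y = u)"
        proof
          fix x y assume e: "E x y"
          then have "x \<in> {a,u,b}" "y \<in> {a,u,b}" using inV V3 by blast+
          moreover have "x \<noteq> y" using e irr by blast
          moreover have "\<not> (x = a \<and> y = b)" "\<not> (x = b \<and> y = a)" using e ab sym by blast+
          ultimately show "(x = a \<and> y = u) \<or> (x = u \<and> y = a) \<or> (x = u \<and> y = b) \<or> (x = b \<and> y = u)"
            by blast
        next
          fix x y
          have "E u a" "E u b" using univ ab0 au bu by auto
          then have "E a u" "E b u" using sym by blast+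
          moreover note \<open>E u a\<close> \<open>E u b\<close>
          moreover assume "(x = a \<and> y = u) \<or> (x = u \<and> y = a) \<or> (x = u \<and> y = b) \<or> (x = b \<and> y = u)"
          ultimately show "E x y" by blast
        qed
        have "graph_iso V E P3_verts P3_adj" by (rule P3_iso[OF V3 au ab(1) bu[symmetric] Ech])
        then show ?thesis using m3 by simp
      qed
    qed
  next
    assume R: "(m = 2 \<and> graph_iso V E (K_verts 2) (K_adj 2))
      \<or> (m = 3 \<and> (graph_iso V E (K_verts 3) (K_adj 3) \<or> graph_iso V E P3_verts P3_adj))
      \<or> (m \<ge> 4 \<and> graph_iso V E (K_verts m) (K_adj m))"
    have R': "graph_iso V E (K_verts m) (K_adj m) \<or> (m = 3 \<and> graph_iso V E P3_verts P3_adj)"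
      using R by auto
    show "well_dominated (cart_verts (K_verts m) V) (cart_adj (K_verts m) (K_adj m) V E)"
    proof (rule wd[OF m2 sg cVm])
      fix D assume md: "minimal_dominating_set (cart_verts (K_verts m) V) (cart_adj (K_verts m) (K_adj m) V E) D"
      show "card D \<le> card V"
      proof (cases "V \<subseteq> snd ` D")
        case True then show ?thesis using col_case[OF m2 sg cVm md] by blast
      next
        case False
        then obtain h0 where h0: "h0 \<in> V" "h0 \<notin> snd ` D" by blast
        from R' show ?thesis
        proof
          assume "graph_iso V E (K_verts m) (K_adj m)"
          then have "card V = m" "\<forall>x\<in>V. \<forall>y\<in>V. E x y \<longleftrightarrow> x \<noteq> y" using iso_K by blast+
          then show ?thesis using complete_case[OF m2 sg cVm _ md h0] by simp
        next
          assume P: "m = 3 \<and> graph_iso V E P3_verts P3_adj"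
          then obtain a u b where abu: "V = {a,u,b}" "a \<noteq> u" "a \<noteq> b" "u \<noteq> b"
            "\<forall>x y. E x y \<longleftrightarrow> (x = a \<and> y = u) \<or> (x = u \<and> y = a) \<or> (x = u \<and> y = b) \<or> (x = b \<and> y = u)"
            using iso_P3[OF sg] by blast
          have "card V = 3" using abu by simp
          moreover have "card D \<le> m"
            using p3_case[OF m2 sg cVm abu(1-4) _ md h0] abu(5) by blast
          ultimately show ?thesis using P by simp
        qed
      qed
    qed
  qed
qed

end
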